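(* Let $U:\mathbb{R}\to\mathbb{R}$ be a twice continuously differentiable potential energy function with several stable solutions (local minimizers), let $y_{+}$ denote the largest stable solution of $U$, and assume that $y_{+}$ is the unique global minimizer of $U$, i.e. $U(y_{+})<U(y)$ for all $y\neq y_{+}$. Let $D>0$ be a constant coupling strength and $x_{\max}>0$. Then there is no pot-shaped stationary solution, i.e. there is no twice differentiable function $y:[-x_{\max},x_{\max}]\to\mathbb{R}$ satisfying $$0=-U'(y(x))+D\,y''(x)\quad\text{for } x\in(-x_{\max},x_{\max}),\qquad y(\pm x_{\max})=y_{+},$$ together with $y(0)<y(\pm x_{\max})$ and $y'(x)\ge 0$ for all $x\in(0,x_{\max})$.
   Context: The setting is the spatially-coupled dynamical system $\partial y/\partial t=-U'(y)+D\,\partial^{2}y/\partial x^{2}$ for $x\in(-x_{\max},x_{\max})$, $t\ge 0$, with boundary condition $y(\pm x_{\max},t)=y_{+}$, where the coupling function $D>0$ is a constant independent of $y$. A stationary solution is a function $y(x)$ satisfying $0=-U'(y)+D\,y''$ on $(-x_{\max},x_{\max})$ with $y(\pm x_{\max})=y_{+}$. A stable solution of $U$ means a local minimizer of $U$. A stationary solution $y(x)$ is called pot-shaped if (i) $y(0)<y(\pm x_{\max})$ and (ii) $dy/dx\ge 0$ for $x>0$. *)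

theory Defs
  imports "HOL-Analysis.Analysis"
begin

definition local_minimizer :: "(real \<Rightarrow> real) \<Rightarrow> real \<Rightarrow> bool" where
  "local_minimizer U y \<longleftrightarrow> (\<exists>e>0. \<forall>z. \<bar>z - y\<bar> < e \<longrightarrow> U y \<le> U z)"

definition stationary_solution ::
  "(real \<Rightarrow> real) \<Rightarrow> real \<Rightarrow> real \<Rightarrow> real \<Rightarrow>
   (real \<Rightarrow> real) \<Rightarrow> (real \<Rightarrow> real) \<Rightarrow> (real \<Rightarrow> real) \<Rightarrow> bool" where
  "stationary_solution U' D xmax yp y y1 y2 \<longleftrightarrow>
     (\<forall>x\<in>{-xmax..xmax}. (y has_real_derivative y1 x) (at x within {-xmax..xmax})
                       \<and> (y1 has_real_derivative y2 x) (at x within {-xmax..xmax})) \<and>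
     (\<forall>x\<in>{-xmax<..<xmax}. 0 = - U' (y x) + D * y2 x) \<and>
     y (-xmax) = yp \<and> y xmax = yp"

definition pot_shaped ::
  "real \<Rightarrow> (real \<Rightarrow> real) \<Rightarrow> (real \<Rightarrow> real) \<Rightarrow> bool" where
  "pot_shaped xmax y y1 \<longleftrightarrow>
     y 0 < y xmax \<and> y 0 < y (-xmax) \<and> (\<forall>x\<in>{0<..<xmax}. y1 x \<ge> 0)"

end

theory Submission
  imports Defs
begin

theorem theorem1:
  fixes U U' U'' :: "real \<Rightarrow> real" and yp D xmax :: real
  assumes U_deriv: "\<And>z. (U has_real_derivative U' z) (at z)"
    and U'_deriv: "\<And>z. (U' has_real_derivative U'' z) (at z)"
    and U''_cont: "continuous_on UNIV U''"
    and several: "\<exists>a b. a \<noteq> b \<and> local_minimizer U a \<and> local_minimizer U b"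
    and yp_stable: "local_minimizer U yp"
    and yp_largest: "\<And>z. local_minimizer U z \<Longrightarrow> z \<le> yp"
    and yp_global: "\<And>z. z \<noteq> yp \<Longrightarrow> U yp < U z"
    and D_pos: "D > 0"
    and xmax_pos: "xmax > 0"
  shows "\<not> (\<exists>y y1 y2. stationary_solution U' D xmax yp y y1 y2 \<and> pot_shaped xmax y y1)"
proof
  assume "\<exists>y y1 y2. stationary_solution U' D xmax yp y y1 y2 \<and> pot_shaped xmax y y1"
  then obtain y y1 y2 where st: "stationary_solution U' D xmax yp y y1 y2"
    and ps: "pot_shaped xmax y y1" by blast
  let ?I = "{-xmax..xmax}"
  have dy: "\<And>x. x \<in> ?I \<Longrightarrow> (y has_real_derivative y1 x) (at x within ?I)"
    and dy1: "\<And>x. x \<in> ?I \<Longrightarrow> (y1 has_real_derivative y2 x) (at x within ?I)"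
    and ode: "\<And>x. x \<in> {-xmax<..<xmax} \<Longrightarrow> 0 = - U' (y x) + D * y2 x"
    and b1: "y (-xmax) = yp" and b2: "y xmax = yp"
    using st unfolding stationary_solution_def by auto
  have y0: "y 0 < yp" using ps b2 unfolding pot_shaped_def by auto
  have cy: "continuous_on ?I y"
    unfolding continuous_on_eq_continuous_within using dy DERIV_continuous by blast
  have cy1: "continuous_on ?I y1"
    unfolding continuous_on_eq_continuous_within using dy1 DERIV_continuous by blast
  have dopen: "\<And>x f f'. x \<in> {-xmax<..<xmax} \<Longrightarrow> (f has_real_derivative f') (at x within ?I)
      \<Longrightarrow> (f has_real_derivative f') (at x)"
  proof -
    fix x f f' assume x: "x \<in> {-xmax<..<xmax}" and d: "(f has_real_derivative f') (at x within ?I)"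
    have "(f has_real_derivative f') (at x within {-xmax<..<xmax})"
      using d by (rule DERIV_subset) auto
    moreover have "at x within {-xmax<..<xmax} = at x" by (rule at_within_open[OF x]) simp
    ultimately show "(f has_real_derivative f') (at x)" by simp
  qed
  obtain m where m: "m \<in> ?I" and mmin: "\<forall>z\<in>?I. y m \<le> y z"
    using continuous_attains_inf[OF compact_Icc _ cy] xmax_pos by auto
  have ym: "y m \<le> y 0" using mmin xmax_pos by auto
  have mi: "m \<in> {-xmax<..<xmax}"
  proof -
    have "m \<noteq> -xmax" using ym y0 b1 by auto
    moreover have "m \<noteq> xmax" using ym y0 b2 by auto
    ultimately show ?thesis using m by auto
  qed
  have y1m: "y1 m = 0"
  proof -
    have A: "DERIV y m :> y1 m" using dopen[OF mi dy[OF m]] .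
    have B: "0 < min (m + xmax) (xmax - m)" using mi by auto
    have C: "\<forall>z. \<bar>m - z\<bar> < min (m + xmax) (xmax - m) \<longrightarrow> y m \<le> y z"
    proof (intro allI impI)
      fix z assume "\<bar>m - z\<bar> < min (m + xmax) (xmax - m)"
      hence "z \<in> ?I" by (simp add: abs_less_iff)
      thus "y m \<le> y z" using mmin by blast
    qed
    show ?thesis using DERIV_local_min[OF A B C] .
  qed
  define E where "E x = D / 2 * (y1 x)^2 - U (y x)" for x
  have "E xmax = E m"
  proof (rule DERIV_isconst_end[of m xmax E])
    show "m < xmax" using mi by auto
    have cU: "continuous_on UNIV U"
      using U_deriv by (meson DERIV_continuous continuous_at_imp_continuous_on)
    have "continuous_on ?I E" unfolding E_def
      by (intro continuous_intros cy1 continuous_on_compose2[OF cU cy]) auto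
    thus "continuous_on {m..xmax} E" by (rule continuous_on_subset) (use m in auto)
    fix x assume x: "m < x" "x < xmax"
    hence xi: "x \<in> {-xmax<..<xmax}" "x \<in> ?I" using mi by auto
    have d1: "DERIV y x :> y1 x" using dopen[OF xi(1) dy[OF xi(2)]] .
    have d2: "DERIV y1 x :> y2 x" using dopen[OF xi(1) dy1[OF xi(2)]] .
    have "DERIV E x :> D / 2 * (2 * y1 x * y2 x) - U' (y x) * y1 x"
    proof -
      have a: "DERIV (\<lambda>x. (y1 x)^2) x :> 2 * y1 x * y2 x"
        using DERIV_power[OF d2, of 2] by (simp add: mult_ac)
      have b: "DERIV (\<lambda>x. U (y x)) x :> U' (y x) * y1 x"
        by (rule DERIV_chain2[OF U_deriv d1])
      show ?thesis unfolding E_def by (intro DERIV_diff DERIV_cmult a b)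
    qed
    moreover have "D / 2 * (2 * y1 x * y2 x) - U' (y x) * y1 x = 0"
      using ode[OF xi(1)] by (simp add: algebra_simps)
    ultimately show "DERIV E x :> 0" by (simp only:)
  qed
  hence "D / 2 * (y1 xmax)^2 - U yp = - U (y m)" using b2 y1m by (simp add: E_def)
  moreover have "D / 2 * (y1 xmax)^2 \<ge> 0" using D_pos by simp
  ultimately have "U (y m) \<le> U yp" by linarith
  moreover have "y m \<noteq> yp" using ym y0 by auto
  ultimately show False using yp_global[of "y m"] by linarith
qed

end
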